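(* Let $j\ge 3$ be an integer and let $\bar\alpha_j$ be the largest $\alpha\ge 0$ such that $\left(1-e^{-\alpha jx}\right)^{j-2}\left(1+(j-2)e^{-\alpha jx}\right)\le x$ for all $x\in(0,1]$. For $\alpha>0$ and an integer $k>\alpha j$, let $\delta=\alpha j/k$, $\lambda(z)=z^{j-1}$, $\rho(z)=z^{k-1}$, and define $x_0=\delta$ and $$x_{i+1}=\delta\Bigl(\lambda\bigl(1-\rho(1-x_i)\bigr)+\lambda'\bigl(1-\rho(1-x_i)\bigr)\bigl(\rho(1-x_i)-\rho\bigl(1-(1-\delta)\lambda(1-\rho(1-x_i))-x_i\bigr)\bigr)\Bigr),$$ where $\lambda'(z)=(j-1)z^{j-2}$. (a) If $\alpha<\bar\alpha_j$, there exists $K_1<\infty$ such that for all $k\ge K_1$, $x_i\to 0$ as $i\to\infty$. (b) If $\alpha>\bar\alpha_j$, there exists $K_2<\infty$ such that for all $k\ge K_2$, $x_i$ does not converge to $0$.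
   Context: The recursion is the message-based density evolution of the LM2 verification-decoding algorithm (LM2-MB) for a $(j,k)$-regular LDPC code on the $q$-ary symmetric channel with error probability $\delta$ (equivalently, reconstruction of a strictly sparse signal with fraction $\delta$ of nonzero entries); $x_i$ is the fraction of unverified messages, and $x_i\to 0$ corresponds to successful decoding with high probability as the block length tends to infinity. *)

theory Defs
  imports Complex_Main
begin

definition alpha_bar :: "nat \<Rightarrow> real" where
  "alpha_bar j = (GREATEST \<alpha>. \<alpha> \<ge> 0 \<and>
     (\<forall>x\<in>{0<..1}. (1 - exp (- \<alpha> * real j * x)) ^ (j - 2)
                     * (1 + real (j - 2) * exp (- \<alpha> * real j * x)) \<le> x))"

definition lam :: "nat \<Rightarrow> real \<Rightarrow> real" where
  "lam j z = z ^ (j - 1)"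

definition lam' :: "nat \<Rightarrow> real \<Rightarrow> real" where
  "lam' j z = real (j - 1) * z ^ (j - 2)"

definition rho :: "nat \<Rightarrow> real \<Rightarrow> real" where
  "rho k z = z ^ (k - 1)"

definition lm2_step :: "nat \<Rightarrow> nat \<Rightarrow> real \<Rightarrow> real \<Rightarrow> real" where
  "lm2_step j k \<delta> x =
     (let r = rho k (1 - x); y = 1 - r in
      \<delta> * (lam j y + lam' j y * (r - rho k (1 - (1 - \<delta>) * lam j y - x))))"

fun lm2_seq :: "nat \<Rightarrow> nat \<Rightarrow> real \<Rightarrow> nat \<Rightarrow> real" where
  "lm2_seq j k \<delta> 0 = \<delta>"
| "lm2_seq j k \<delta> (Suc i) = lm2_step j k \<delta> (lm2_seq j k \<delta> i)"

end

theory Submission imports Defs "HOL-Analysis.Elementary_Metric_Spaces" begin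
definition hh :: "nat \<Rightarrow> real \<Rightarrow> real" where
  "hh n y = y^(n+1) + real (n+1) * y^n * (1-y)"

lemma hh_deriv: "DERIV (hh (Suc p)) x :> real (p+2) * real (Suc p) * x^p * (1-x)"
  unfolding hh_def
  apply (rule derivative_eq_intros refl | simp)+
  done

lemma hh_cont: "continuous_on A (hh n)"
  unfolding hh_def by (intro continuous_intros)

lemma hh_strict:
  assumes "0 \<le> a" "a < b" "b \<le> 1" shows "hh (Suc p) a < hh (Suc p) b"
proof (rule DERIV_pos_imp_increasing_open[OF assms(2)])
  fix x assume "a < x" "x < b"
  then show "\<exists>y. DERIV (hh (Suc p)) x :> y \<and> y > 0"
    using assms by (intro exI[of _ "real (p+2) * real (Suc p) * x^p * (1-x)"] conjI hh_deriv)
      (auto intro!: mult_pos_pos)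
qed (rule hh_cont)

lemma hh_mono:
  assumes "0 \<le> a" "a \<le> b" "b \<le> 1" shows "hh (Suc p) a \<le> hh (Suc p) b"
  using hh_strict[of a b p] assms by (cases "a = b") auto

lemma hh_1: "hh n 1 = 1" by (simp add: hh_def)
lemma hh_0: "hh (Suc p) 0 = 0" by (simp add: hh_def)

lemma hh_le1: "0 \<le> y \<Longrightarrow> y \<le> 1 \<Longrightarrow> hh (Suc p) y \<le> 1"
  using hh_mono[of y 1 p] by (simp add: hh_1)

lemma hh_ge0: "0 \<le> y \<Longrightarrow> y \<le> 1 \<Longrightarrow> 0 \<le> hh (Suc p) y"
  using hh_mono[of 0 y p] by (simp add: hh_0)

lemma fexpr_hh: "(1 - t)^n * (1 + real n * t) = hh n (1 - t)"
  by (simp add: hh_def algebra_simps)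

lemma step_props:
  fixes k :: nat and y w :: real
  assumes "0 < \<delta>" "\<delta> < 1" "0 \<le> x" "x \<le> \<delta>" "j = Suc (Suc n)"
  and y_def: "y = 1 - (1-x)^(k-1)" and w_def: "w = 1 - (1-\<delta>)*y^(Suc n) - x"
  shows "0 \<le> y" "y \<le> 1" "0 \<le> w" "w \<le> 1 - x"
    "lm2_step j k \<delta> x = \<delta> * (hh n y - real (Suc n) * y^n * w^(k-1))"
    "lm2_step j k \<delta> x \<le> \<delta> * hh n y"
    "lm2_step j k \<delta> x \<ge> \<delta> * (hh n y - real (Suc n) * w^(k-1))"
    "lm2_step j k \<delta> x \<ge> 0"
proof -
  have x1: "0 \<le> 1 - x" "1 - x \<le> 1" using assms by auto
  have r0: "0 \<le> (1-x)^(k-1)" "(1-x)^(k-1) \<le> 1" using x1 by (auto intro: power_le_one)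
  show y0: "0 \<le> y" "y \<le> 1" using r0 by (auto simp: y_def)
  have yp: "y^(Suc n) \<le> 1" "0 \<le> y^(Suc n)" "y^n \<le> 1" "0 \<le> y^n" using y0 power_le_one[of y "Suc n"] by (auto intro: power_le_one simp del: power_Suc)
  have "(1-\<delta>)*y^(Suc n) \<le> 1 - \<delta>" using yp assms by (simp add: mult_left_le)
  then show w0: "0 \<le> w" using assms(4) unfolding w_def by linarith
  have "0 \<le> (1-\<delta>)*y^(Suc n)" using yp assms by simp
  then show w1: "w \<le> 1 - x" unfolding w_def by linarith
  have wk: "0 \<le> w^(k-1)" "w^(k-1) \<le> (1-x)^(k-1)" using w0 w1 by (auto intro: power_mono)
  show eq: "lm2_step j k \<delta> x = \<delta> * (hh n y - real (Suc n) * y^n * w^(k-1))"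
    using assms(5) unfolding lm2_step_def Let_def lam_def lam'_def rho_def hh_def w_def y_def
    by (simp add: algebra_simps)
  have "0 \<le> real (Suc n) * y^n * w^(k-1)" using yp wk by simp
  then show "lm2_step j k \<delta> x \<le> \<delta> * hh n y" using eq assms by (simp add: mult_left_mono)
  have "y^n * w^(k-1) \<le> w^(k-1)" using yp wk by (simp add: mult_left_le_one_le)
  then have "real (Suc n) * y^n * w^(k-1) \<le> real (Suc n) * w^(k-1)"
    by (metis mult.assoc mult_left_mono of_nat_0_le_iff)
  then show "lm2_step j k \<delta> x \<ge> \<delta> * (hh n y - real (Suc n) * w^(k-1))"
    unfolding eq using assms(1) by (intro mult_left_mono) auto
  have "hh n y - real (Suc n) * y^n * w^(k-1) = y^(Suc n) + real (Suc n) * y^n * ((1-x)^(k-1) - w^(k-1))"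
    by (simp add: hh_def y_def algebra_simps)
  also have "\<dots> \<ge> 0" using yp wk by simp
  finally show "lm2_step j k \<delta> x \<ge> 0" using eq assms by simp
qed

lemma pow_exp_lower:
  assumes "0 \<le> x" "x \<le> 1/2"
  shows "exp (- (real k) * (x + 2*x^2)) \<le> (1-x)^(k-1)"
proof -
  have "exp (-x - 2*x^2) \<le> exp (ln (1-x))"
    using ln_one_minus_pos_lower_bound[OF assms] by simp
  also have "\<dots> = 1 - x" using assms by simp
  finally have e: "exp (-x - 2*x^2) \<le> 1 - x" .
  have "exp (- (real k) * (x + 2*x^2)) \<le> exp (- real (k-1) * (x + 2*x^2))"
    using assms by (intro exp_mono mult_right_mono) auto
  also have "\<dots> = exp (-x - 2*x^2) ^ (k-1)"
    by (subst exp_of_nat_mult[symmetric]) (simp add: algebra_simps)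
  also have "\<dots> \<le> (1-x)^(k-1)" using e by (intro power_mono) auto
  finally show ?thesis .
qed
lemma P_bound:
  assumes "j = Suc (Suc n)" "b \<ge> 0"
    and h: "(1 - exp (- b * real j * (1/2)))^n * (1 + real n * exp (- b * real j * (1/2))) \<le> 1/2"
  shows "b \<le> 4 * real n"
proof -
  define t where "t = exp (- b * real j * (1/2))"
  have t0: "0 < t" "t \<le> 1" using assms by (auto simp: t_def)
  have "(1 - t)^n \<le> (1-t)^n * (1 + real n * t)" using t0 by (simp add: mult_le_cancel_left1)
  moreover have "1 + real n * (-t) \<le> (1 + (-t))^n" using t0 by (intro Bernoulli_inequality) auto
  ultimately have "1 - real n * t \<le> 1/2" using h unfolding t_def[symmetric] by simp
  hence nt: "1 \<le> 2 * real n * t" by simp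
  have "exp (b * real j / 2) * t = 1" unfolding t_def by (simp add: exp_add[symmetric])
  hence et: "exp (b * real j / 2) * t = 1" .
  have "exp (b * real j / 2) = exp (b * real j / 2) * 1" by simp
  also have "\<dots> \<le> exp (b * real j / 2) * (2 * real n * t)" using nt by (intro mult_left_mono) auto
  also have "\<dots> = 2 * real n * (exp (b * real j / 2) * t)" by (simp add: algebra_simps)
  also have "\<dots> = 2 * real n" using et by simp
  finally have "exp (b * real j / 2) \<le> 2 * real n" .
  moreover have "1 + b * real j / 2 \<le> exp (b * real j / 2)" by (rule exp_ge_add_one_self)
  ultimately have "b * real j \<le> 4 * real n" by linarith
  moreover have "b \<le> b * real j" using assms by (simp add: mult_le_cancel_left1)
  ultimately show ?thesis by simp
qed
lemma alpha_bar_char: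
  assumes j: "j = Suc (Suc (Suc p))"
  shows "alpha_bar j \<ge> 0 \<and> (\<forall>x\<in>{0<..1}. hh (Suc p) (1 - exp (- alpha_bar j * real j * x)) \<le> x)
     \<and> (\<forall>b. b \<ge> 0 \<and> (\<forall>x\<in>{0<..1}. hh (Suc p) (1 - exp (- b * real j * x)) \<le> x) \<longrightarrow> b \<le> alpha_bar j)"
proof -
  define P where "P a \<longleftrightarrow> a \<ge> 0 \<and> (\<forall>x\<in>{0<..1}. (1 - exp (- a * real j * x)) ^ (j - 2)
                     * (1 + real (j - 2) * exp (- a * real j * x)) \<le> x)" for a
  have jn: "j - 2 = Suc p" using j by simp
  have Ph: "P a \<longleftrightarrow> a \<ge> 0 \<and> (\<forall>x\<in>{0<..1}. hh (Suc p) (1 - exp (- a * real j * x)) \<le> x)" for a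
    unfolding P_def jn fexpr_hh ..
  have P0: "P 0" unfolding P_def jn by auto
  have bnd: "b \<le> 4 * real (Suc p)" if "P b" for b
  proof (rule P_bound[of j "Suc p"])
    show "j = Suc (Suc (Suc p))" by (rule j)
    show "0 \<le> b" using that P_def by auto
    show "(1 - exp (- b * real j * (1/2)))^(Suc p) * (1 + real (Suc p) * exp (- b * real j * (1/2))) \<le> 1/2"
      using that unfolding P_def jn by (elim conjE) (drule bspec[of _ _ "1/2"], auto)
  qed
  have ceq: "Collect P = {a. 0 \<le> a} \<inter> (\<Inter>x\<in>{0<..1}. {a. (1 - exp (- a * real j * x)) ^ (j - 2)
                     * (1 + real (j - 2) * exp (- a * real j * x)) \<le> x})"
    unfolding P_def by auto
  have cl: "closed (Collect P)" unfolding ceq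
    by (intro closed_Int closed_INT ballI closed_Collect_le continuous_intros)
  define A where "A = Sup (Collect P)"
  have bdd: "bdd_above (Collect P)" by (rule bdd_aboveI[of _ "4 * real (Suc p)"]) (use bnd in auto)
  have PA: "P A" unfolding A_def using closed_contains_Sup[OF _ bdd cl] P0 by auto
  have up: "b \<le> A" if "P b" for b unfolding A_def using that bdd by (auto intro: cSup_upper)
  have "(GREATEST a. P a) = A" using PA up by (intro Greatest_equality) auto
  hence eq: "alpha_bar j = A" unfolding alpha_bar_def P_def .
  show ?thesis using PA up unfolding eq Ph by blast
qed
lemma part_a:
  fixes j p :: nat and \<alpha> a :: real
  assumes j: "j = Suc (Suc (Suc p))" and \<alpha>: "\<alpha> > 0" "\<alpha> < a"
    and Pa: "\<forall>x\<in>{0<..1}. hh (Suc p) (1 - exp (- a * real j * x)) \<le> x"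
  shows "\<exists>K1::nat. \<forall>k::nat. k \<ge> K1 \<and> real k > \<alpha> * real j \<longrightarrow>
               (\<lambda>i. lm2_seq j k (\<alpha> * real j / real k) i) \<longlonglongrightarrow> 0"
proof -
  define c where "c = \<alpha> * real j"
  define c' where "c' = (\<alpha> + a)/2 * real j"
  have jpos: "real j > 0" using j by simp
  have c: "0 < c" "c < c'" "c' < a * real j" using \<alpha> jpos by (auto simp: c_def c'_def)
  define F where "F s = hh (Suc p) (1 - exp (- c' * s))" for s
  have Flt: "F s < s" if "0 < s" "s \<le> 1" for s
  proof -
    have "exp (- a * real j * s) < exp (- c' * s)" using c that by simp
    moreover have "exp (- c' * s) \<le> 1" using c that by simp
    ultimately have "F s < hh (Suc p) (1 - exp (- a * real j * s))"
      unfolding F_def by (intro hh_strict) auto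
    also have "\<dots> \<le> s" using Pa that by auto
    finally show ?thesis .
  qed
  have F0: "F 0 = 0" by (simp add: F_def hh_0)
  have Fle: "F s \<le> s" if "0 \<le> s" "s \<le> 1" for s
    using Flt[of s] F0 that by (cases "s = 0") auto
  have Fcont: "isCont F s" for s unfolding F_def hh_def by (intro continuous_intros)
  define K where "K = nat \<lceil>2*c + 2*c^2/(c'-c)\<rceil>"
  show ?thesis
  proof (intro exI[of _ K] allI impI, elim conjE)
    fix k :: nat assume kK: "k \<ge> K" and kc0: "real k > \<alpha> * real j"
    have kc: "real k > c" using kc0 c_def by simp
    have "real k \<ge> 2*c + 2*c^2/(c'-c)"
      using kK unfolding K_def by linarith
    moreover have "2*c^2/(c'-c) \<ge> 0" using c by simp
    ultimately have k1: "real k \<ge> 2*c" and k2': "2*c^2/(c'-c) \<le> real k"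
      using c by linarith+
    have k2: "2*c^2 \<le> real k * (c'-c)" using k2' c by (simp add: pos_divide_le_eq)
    have kpos: "real k > 0" using kc c by simp
    define \<delta> where "\<delta> = c / real k"
    have \<delta>: "0 < \<delta>" "\<delta> < 1" "\<delta> \<le> 1/2" using c kc k1 kpos by (auto simp: \<delta>_def field_simps)
    have kd: "real k * \<delta> = c" using kpos by (simp add: \<delta>_def)
    have bound: "lm2_step j k \<delta> (\<delta>*s) \<le> \<delta> * F s \<and> 0 \<le> lm2_step j k \<delta> (\<delta>*s)"
      if s: "0 \<le> s" "s \<le> 1" for s
    proof -
      define y where "y = 1 - (1 - \<delta>*s)^(k-1)"
      define w where "w = 1 - (1-\<delta>)*y^(Suc (Suc p)) - \<delta>*s"
      have xs01: "0 \<le> \<delta>*s" "\<delta>*s \<le> \<delta>" using \<delta> s mult_left_le[of s \<delta>] by auto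
      have xs: "0 \<le> \<delta>*s" "\<delta>*s \<le> \<delta>" "\<delta>*s \<le> 1/2" using xs01 \<delta> by linarith+
      note sp = step_props[OF \<delta>(1,2) xs(1,2) j y_def w_def]
      have "real k * (\<delta>*s + 2*(\<delta>*s)^2) = c*s + 2*c*\<delta>*s*s"
        by (simp add: kd[symmetric] algebra_simps power2_eq_square)
      also have "\<dots> \<le> c*s + 2*c*\<delta>*s*1" using c \<delta> s by (intro add_left_mono mult_left_mono) auto
      finally have A: "real k * (\<delta>*s + 2*(\<delta>*s)^2) \<le> c*s + 2*c*\<delta>*s" by simp
      have "2*c*\<delta> = 2*c^2/real k" by (simp add: \<delta>_def power2_eq_square)
      also have "2*c^2/real k \<le> c' - c" using k2 kpos by (simp add: field_simps)
      finally have "2*c*\<delta>*s \<le> (c' - c)*s" using s by (intro mult_right_mono) auto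
      with A have "real k * (\<delta>*s + 2*(\<delta>*s)^2) \<le> c' * s" by (simp add: algebra_simps)
      hence "exp (- c' * s) \<le> exp (- real k * (\<delta>*s + 2*(\<delta>*s)^2))" by simp
      also have "\<dots> \<le> (1 - \<delta>*s)^(k-1)" by (rule pow_exp_lower) (use xs in auto)
      finally have "y \<le> 1 - exp (- c' * s)" unfolding y_def by simp
      moreover have "1 - exp (- c' * s) \<le> 1" by simp
      ultimately have "hh (Suc p) y \<le> F s" unfolding F_def using sp(1) by (intro hh_mono) auto
      hence "\<delta> * hh (Suc p) y \<le> \<delta> * F s" using \<delta> by simp
      then show ?thesis using sp(6,8) by simp
    qed
    define s where "s i = lm2_seq j k \<delta> i / \<delta>" for i
    have seq: "lm2_seq j k \<delta> i = \<delta> * s i" for i using \<delta> by (simp add: s_def)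
    have inv: "0 \<le> s i \<and> s i \<le> 1 \<and> s (Suc i) \<le> F (s i)" for i
    proof (induction i)
      case 0
      have "s 0 = 1" using \<delta> by (simp add: s_def)
      have "s 1 = lm2_step j k \<delta> \<delta> / \<delta>" by (simp add: s_def)
      also have "\<dots> \<le> F 1" using bound[of 1] \<delta> by (simp add: pos_divide_le_eq mult.commute)
      finally show ?case using \<open>s 0 = 1\<close> by simp
    next
      case (Suc i)
      have b: "lm2_step j k \<delta> (\<delta>*s i) \<le> \<delta> * F (s i)" "0 \<le> lm2_step j k \<delta> (\<delta>*s i)"
        using bound[of "s i"] Suc by auto
      have eq: "s (Suc i) = lm2_step j k \<delta> (\<delta>*s i) / \<delta>" using seq[of i] by (simp add: s_def)
      have s1: "0 \<le> s (Suc i)" "s (Suc i) \<le> F (s i)" unfolding eq using b \<delta> by (auto simp: field_simps)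
      have s2: "s (Suc i) \<le> 1" using s1 Fle[of "s i"] Suc by auto
      have b2: "lm2_step j k \<delta> (\<delta>*s (Suc i)) \<le> \<delta> * F (s (Suc i))"
        using bound[of "s (Suc i)"] s1 s2 by auto
      have eq2: "s (Suc (Suc i)) = lm2_step j k \<delta> (\<delta>*s (Suc i)) / \<delta>" using seq[of "Suc i"] by (simp add: s_def)
      have "s (Suc (Suc i)) \<le> F (s (Suc i))" unfolding eq2 using b2 \<delta> by (auto simp: field_simps)
      then show ?case using s1 s2 by simp
    qed
    have dec: "decseq s"
    proof (rule decseq_SucI)
      fix i show "s (Suc i) \<le> s i" using inv[of i] Fle[of "s i"] by auto
    qed
    obtain L where L: "s \<longlonglongrightarrow> L" "\<forall>i. L \<le> s i"
      using decseq_convergent[OF dec, of 0] inv by auto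
    have L0: "0 \<le> L" using L(1) by (rule LIMSEQ_le_const) (use inv in auto)
    have L1: "L \<le> 1" using spec[OF L(2), of 0] inv[of 0] by linarith
    have "(\<lambda>i. s (Suc i)) \<longlonglongrightarrow> L" using L(1) by (rule LIMSEQ_Suc)
    moreover have "(\<lambda>i. F (s i)) \<longlonglongrightarrow> F L" using L(1) Fcont by (rule isCont_tendsto_compose[rotated])
    ultimately have "L \<le> F L" using inv by (intro LIMSEQ_le) auto
    hence "L = 0" using Flt[of L] L0 L1 by force
    hence "(\<lambda>i. \<delta> * s i) \<longlonglongrightarrow> \<delta> * 0" using L(1) by (intro tendsto_intros) auto
    hence "(\<lambda>i. lm2_seq j k \<delta> i) \<longlonglongrightarrow> 0" using seq by simp
    then show "(\<lambda>i. lm2_seq j k (\<alpha> * real j / real k) i) \<longlonglongrightarrow> 0" by (simp add: \<delta>_def c_def)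
  qed
qed
lemma part_b:
  fixes j p :: nat and \<alpha> s0 :: real
  assumes j: "j = Suc (Suc (Suc p))" and \<alpha>: "\<alpha> > 0"
    and s0: "0 < s0" "s0 \<le> 1" and gt: "hh (Suc p) (1 - exp (- \<alpha> * real j * s0)) > s0"
  shows "\<exists>K2::nat. \<forall>k::nat. k \<ge> K2 \<and> real k > \<alpha> * real j \<longrightarrow>
               \<not> ((\<lambda>i. lm2_seq j k (\<alpha> * real j / real k) i) \<longlonglongrightarrow> 0)"
proof -
  define c where "c = \<alpha> * real j"
  have c: "c > 0" using \<alpha> j by (simp add: c_def)
  define y0 where "y0 k = 1 - (1 - c*s0/real k)^(k-1)" for k :: nat
  define bs where "bs k = 1 - (1 - c/real k) * y0 k ^ Suc (Suc p)" for k
  define G where "G k = hh (Suc p) (y0 k) - real (Suc (Suc p)) * bs k ^ (k-1)" for k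
  define Y where "Y = 1 - exp (- (c*s0))"
  have Y: "0 < Y" "Y \<le> 1" using c s0 by (auto simp: Y_def)
  have L1: "(\<lambda>k. (1 - c*s0/real k)^(k-1)) \<longlonglongrightarrow> exp (-(c*s0))"
  proof -
    have "(\<lambda>k. (1 + (-(c*s0))/real k)^k / (1 - c*s0/real k)) \<longlonglongrightarrow> exp (-(c*s0)) / (1 - 0)"
      by (intro tendsto_divide tendsto_diff tendsto_const lim_const_over_n tendsto_exp_limit_sequentially) simp
    moreover have "eventually (\<lambda>k. (1 + (-(c*s0))/real k)^k / (1 - c*s0/real k) = (1 - c*s0/real k)^(k-1)) sequentially"
      unfolding eventually_sequentially
    proof (intro exI[of _ "nat \<lceil>c*s0\<rceil> + 1"] allI impI)
      fix k :: nat assume "k \<ge> nat \<lceil>c*s0\<rceil> + 1"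
      hence k: "real k > c*s0" "k \<ge> 1" by linarith+
      hence ne: "1 - c*s0/real k \<noteq> 0" by (simp add: field_simps)
      obtain m where m: "k = Suc m" using k(2) by (cases k) auto
      have "(1 + (-(c*s0))/real k)^k = (1 - c*s0/real k)^(k-1) * (1 - c*s0/real k)"
        unfolding m by (simp add: algebra_simps)
      thus "(1 + (-(c*s0))/real k)^k / (1 - c*s0/real k) = (1 - c*s0/real k)^(k-1)" using ne by simp
    qed
    ultimately show ?thesis by (auto intro: Lim_transform_eventually)
  qed
  have L2: "y0 \<longlonglongrightarrow> Y" unfolding y0_def Y_def by (intro tendsto_intros L1)
  define b where "b = 1 - Y^Suc(Suc p)"
  have L3: "bs \<longlonglongrightarrow> 1 - (1 - 0) * Y^Suc(Suc p)" unfolding bs_def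
    by (intro tendsto_intros L2)
  hence L3': "bs \<longlonglongrightarrow> b" by (simp add: b_def)
  have b: "0 \<le> b" "b < 1" using Y by (auto simp: b_def power_le_one simp del: power_Suc)
  define q where "q = (1 + b)/2"
  have q: "0 \<le> q" "q < 1" "b < q" using b by (auto simp: q_def)
  have ev1: "eventually (\<lambda>k. bs k < q) sequentially" using order_tendstoD(2)[OF L3' q(3)] .
  have bs_ok: "0 \<le> y0 k \<and> y0 k \<le> 1 \<and> 0 \<le> bs k" if "real k > c" for k
  proof -
    have kp: "real k > 0" using that c by simp
    have a1: "0 \<le> 1 - c*s0/real k" "1 - c*s0/real k \<le> 1"
    proof -
      have "c*s0 \<le> c" using c s0 by (simp add: mult_left_le)
      thus "0 \<le> 1 - c*s0/real k" using that kp by (simp add: field_simps)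
      show "1 - c*s0/real k \<le> 1" using c s0 kp by simp
    qed
    have p1: "0 \<le> (1 - c*s0/real k)^(k-1)" "(1 - c*s0/real k)^(k-1) \<le> 1"
      using a1 by (auto intro: power_le_one)
    hence yy: "0 \<le> y0 k" "y0 k \<le> 1" by (auto simp: y0_def)
    have "y0 k ^ Suc (Suc p) \<le> 1" using yy by (intro power_le_one) auto
    moreover have "0 \<le> 1 - c/real k" "1 - c/real k \<le> 1" using that kp c by (auto simp: field_simps)
    ultimately have "(1 - c/real k) * y0 k ^ Suc (Suc p) \<le> 1" by (simp add: mult_le_one yy)
    thus ?thesis using yy by (simp add: bs_def)
  qed
  have ev2: "eventually (\<lambda>k. 0 \<le> bs k) sequentially"
    unfolding eventually_sequentially
    by (intro exI[of _ "nat \<lceil>c\<rceil> + 1"] allI impI, rule bs_ok[THEN conjunct2, THEN conjunct2]) linarith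
  have qlim: "(\<lambda>k. q^(k-1)) \<longlonglongrightarrow> 0"
    by (subst filterlim_sequentially_Suc[symmetric]) (simp add: LIMSEQ_power_zero q)
  have L4: "(\<lambda>k. bs k ^ (k-1)) \<longlonglongrightarrow> 0"
  proof (rule tendsto_sandwich[OF _ _ tendsto_const qlim])
    show "eventually (\<lambda>k. 0 \<le> bs k ^ (k-1)) sequentially" using ev2 by eventually_elim simp
    show "eventually (\<lambda>k. bs k ^ (k-1) \<le> q ^ (k-1)) sequentially" using ev1 ev2
      by eventually_elim (intro power_mono, auto)
  qed
  have L5: "G \<longlonglongrightarrow> hh (Suc p) Y - real (Suc (Suc p)) * 0" unfolding G_def hh_def
    by (intro tendsto_intros L2 L4)
  have "hh (Suc p) Y > s0" using gt by (simp add: Y_def c_def)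
  then obtain N where N: "\<forall>k\<ge>N. G k > s0"
    using order_tendstoD(1)[OF L5] unfolding eventually_sequentially by auto
  show ?thesis
  proof (intro exI[of _ N] allI impI, elim conjE)
    fix k :: nat assume kN: "k \<ge> N" and kc0: "real k > \<alpha> * real j"
    have kc: "real k > c" using kc0 c_def by simp
    have kpos: "real k > 0" using kc c by simp
    define \<delta> where "\<delta> = c / real k"
    have \<delta>: "0 < \<delta>" "\<delta> < 1" using c kc kpos by (auto simp: \<delta>_def field_simps)
    have ds: "\<delta>*s0 = c*s0/real k" by (simp add: \<delta>_def)
    have ds1: "\<delta>*s0 \<le> \<delta>" using \<delta> s0 mult_left_le[of s0 \<delta>] by auto
    have Gk: "G k > s0" using N kN by auto
    note bk = bs_ok[OF kc]
    have inv: "\<delta>*s0 \<le> lm2_seq j k \<delta> i \<and> lm2_seq j k \<delta> i \<le> \<delta>" for i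
    proof (induction i)
      case 0 then show ?case using ds1 by simp
    next
      case (Suc i)
      define x where "x = lm2_seq j k \<delta> i"
      have x: "\<delta>*s0 \<le> x" "x \<le> \<delta>" using Suc by (auto simp: x_def)
      have x0: "0 \<le> x" using x \<delta> s0 by (meson less_imp_le mult_nonneg_nonneg order_trans)
      define y where "y = 1 - (1-x)^(k-1)"
      define w where "w = 1 - (1-\<delta>)*y^(Suc (Suc p)) - x"
      note sp = step_props[OF \<delta>(1,2) x0 x(2) j y_def w_def]
      have "(1-x)^(k-1) \<le> (1 - c*s0/real k)^(k-1)"
        using x \<delta> ds by (intro power_mono) auto
      hence yy: "y0 k \<le> y" by (simp add: y_def y0_def)
      have hy: "hh (Suc p) (y0 k) \<le> hh (Suc p) y" using yy bk sp(2) by (intro hh_mono) auto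
      have "y0 k ^ Suc (Suc p) \<le> y ^ Suc (Suc p)" using yy bk by (intro power_mono) auto
      hence "(1-\<delta>)*y0 k ^ Suc (Suc p) \<le> (1-\<delta>)*y ^ Suc (Suc p)" using \<delta> by (intro mult_left_mono) auto
      hence wb: "w \<le> bs k" using x0 by (simp add: w_def bs_def \<delta>_def)
      have "w^(k-1) \<le> bs k^(k-1)" using wb sp(3) by (intro power_mono) auto
      hence "G k \<le> hh (Suc p) y - real (Suc (Suc p)) * w^(k-1)" using hy unfolding G_def
        by (smt (verit) mult_left_mono of_nat_0_le_iff)
      hence "\<delta> * G k \<le> \<delta> * (hh (Suc p) y - real (Suc (Suc p)) * w^(k-1))" using \<delta> by simp
      moreover have "\<delta> * s0 < \<delta> * G k" using Gk \<delta> by simp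
      moreover have "\<delta> * hh (Suc p) y \<le> \<delta>" using hh_le1[OF sp(1,2)] \<delta> by simp
      ultimately show ?case using sp(6,7) by (simp add: x_def)
    qed
    show "\<not> (\<lambda>i. lm2_seq j k (\<alpha> * real j / real k) i) \<longlonglongrightarrow> 0"
    proof
      assume "(\<lambda>i. lm2_seq j k (\<alpha> * real j / real k) i) \<longlonglongrightarrow> 0"
      hence "(\<lambda>i. lm2_seq j k \<delta> i) \<longlonglongrightarrow> 0" by (simp add: \<delta>_def c_def)
      hence "\<delta>*s0 \<le> 0" by (rule LIMSEQ_le_const) (use inv in auto)
      moreover have "0 < \<delta>*s0" using \<delta> s0 by simp
      ultimately show False by linarith
    qed
  qed
qed
theorem theorem4:
  fixes j :: nat and \<alpha> :: real
  assumes "j \<ge> 3" and "\<alpha> > 0"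
  shows "(\<alpha> < alpha_bar j \<longrightarrow>
            (\<exists>K1::nat. \<forall>k::nat. k \<ge> K1 \<and> real k > \<alpha> * real j \<longrightarrow>
               (\<lambda>i. lm2_seq j k (\<alpha> * real j / real k) i) \<longlonglongrightarrow> 0))
       \<and> (\<alpha> > alpha_bar j \<longrightarrow>
            (\<exists>K2::nat. \<forall>k::nat. k \<ge> K2 \<and> real k > \<alpha> * real j \<longrightarrow>
               \<not> ((\<lambda>i. lm2_seq j k (\<alpha> * real j / real k) i) \<longlonglongrightarrow> 0)))"
proof -
  define p where "p = j - 3"
  have j: "j = Suc (Suc (Suc p))" using assms(1) unfolding p_def by arith
  note ab = alpha_bar_char[OF j]
  show ?thesis
  proof (intro conjI impI)
    assume "\<alpha> < alpha_bar j"
    then show "\<exists>K1::nat. \<forall>k::nat. k \<ge> K1 \<and> real k > \<alpha> * real j \<longrightarrow>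
               (\<lambda>i. lm2_seq j k (\<alpha> * real j / real k) i) \<longlonglongrightarrow> 0"
      using part_a[OF j assms(2)] ab by blast
  next
    assume gt: "\<alpha> > alpha_bar j"
    have "\<not> (\<forall>x\<in>{0<..1}. hh (Suc p) (1 - exp (- \<alpha> * real j * x)) \<le> x)"
    proof
      assume "\<forall>x\<in>{0<..1}. hh (Suc p) (1 - exp (- \<alpha> * real j * x)) \<le> x"
      hence "\<alpha> \<le> alpha_bar j" using ab assms(2) by auto
      thus False using gt by simp
    qed
    then obtain s0 where s0: "0 < s0" "s0 \<le> 1" "hh (Suc p) (1 - exp (- \<alpha> * real j * s0)) > s0"
      by (auto simp: not_le)
    show "\<exists>K2::nat. \<forall>k::nat. k \<ge> K2 \<and> real k > \<alpha> * real j \<longrightarrow>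
               \<not> ((\<lambda>i. lm2_seq j k (\<alpha> * real j / real k) i) \<longlonglongrightarrow> 0)"
      by (rule part_b[OF j assms(2) s0])
  qed
qed
end
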